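(* Fix $\beta\in(1,2)$ and let $Y=(Y_s)_{s\in\mathbb Z_{\ge0}}$ be the discrete-time random walk on the weighted graph described in the context, run in stationarity, and let $\mathcal C=\mathbb N^+=\{1,2,3,\dots\}$. Then $\mathbf P[Y_0\in\mathcal C]=1/2$ and, as $t\to\infty$, $$\mathbf P\big[Y_s\in\mathcal C\ \ \forall s\in\{0,1,\dots,t\}\big]=t^{\frac{1-\beta}{2}+o(1)}.$$
   Context: The graph has vertex set $\mathbb Z^*=\mathbb Z\setminus\{0\}$ and edges: nearest-neighbour edges $\{n,n+1\}$ and $\{-(n+1),-n\}$ for $n\ge1$, the edge $\{-1,1\}$, and a self-loop at every vertex. Conductances: $c_{n,n+1}=c_{-(n+1),-n}=n^{-\beta}$ for $n\ge1$; $c_{-1,1}=c_{1,1}=c_{-1,-1}=1/2$; and for $|n|\ge2$ the self-loop conductance is $c_{n,n}=c_{n,n-1}+c_{n,n+1}$ (conductance of the two edges at $n$). The walk moves from $x$ to $y$ with probability $c_{x,y}/\pi(x)$, where $\pi(x)=\sum_y c_{x,y}$ (self-loop counted once); $\pi$ has finite total mass and the walk is run started from the normalized $\pi$. $\mathbf P$ is the law of this stationary walk. *)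

theory Defs
  imports "HOL-Probability.Probability"
begin

text \<open>Vertices of the graph are the nonzero integers; the integer 0 is not a vertex
(all conductances at 0 vanish, so 0 carries no mass).\<close>

definition edge_cond :: "real \<Rightarrow> int \<Rightarrow> int \<Rightarrow> real" where
  "edge_cond \<beta> x y =
     (if 0 < x \<and> 0 < y \<and> \<bar>x - y\<bar> = 1 then real_of_int (min x y) powr (- \<beta>)
      else if x < 0 \<and> y < 0 \<and> \<bar>x - y\<bar> = 1 then real_of_int (min \<bar>x\<bar> \<bar>y\<bar>) powr (- \<beta>)
      else if (x = -1 \<and> y = 1) \<or> (x = 1 \<and> y = -1) then 1/2
      else 0)"

definition cond :: "real \<Rightarrow> int \<Rightarrow> int \<Rightarrow> real" where
  "cond \<beta> x y =
     (if x = y then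
        (if \<bar>x\<bar> \<ge> 2 then edge_cond \<beta> x (x - 1) + edge_cond \<beta> x (x + 1)
         else if \<bar>x\<bar> = 1 then 1/2 else 0)
      else edge_cond \<beta> x y)"

definition pi_w :: "real \<Rightarrow> int \<Rightarrow> real" where
  "pi_w \<beta> x = infsum (\<lambda>y. cond \<beta> x y) UNIV"

definition pi_total :: "real \<Rightarrow> real" where
  "pi_total \<beta> = infsum (pi_w \<beta>) UNIV"

definition init_pmf :: "real \<Rightarrow> int pmf" where
  "init_pmf \<beta> = embed_pmf (\<lambda>x. pi_w \<beta> x / pi_total \<beta>)"

text \<open>Transition kernel \<open>P(x,y) = c_{x,y}/\<pi>(x)\<close>; the value at the non-vertex 0 is irrelevant.\<close>
definition step_pmf :: "real \<Rightarrow> int \<Rightarrow> int pmf" where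
  "step_pmf \<beta> x = (if x = 0 then return_pmf 0
                    else embed_pmf (\<lambda>y. cond \<beta> x y / pi_w \<beta> x))"

fun path_pmf :: "real \<Rightarrow> nat \<Rightarrow> int list pmf" where
  "path_pmf \<beta> 0 = map_pmf (\<lambda>x. [x]) (init_pmf \<beta>)"
| "path_pmf \<beta> (Suc t) =
     bind_pmf (path_pmf \<beta> t) (\<lambda>xs. map_pmf (\<lambda>y. xs @ [y]) (step_pmf \<beta> (last xs)))"

definition stay_pos :: "real \<Rightarrow> nat \<Rightarrow> real" where
  "stay_pos \<beta> t = measure_pmf.prob (path_pmf \<beta> t) {xs. \<forall>x\<in>set xs. 0 < x}"

end

theory Submission
  imports Defs
begin


definition aa :: "real \<Rightarrow> int \<Rightarrow> real" where "aa \<beta> n = real_of_int n powr (-\<beta>)"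

lemma aa_pos: "n \<ge> 1 \<Longrightarrow> aa \<beta> n > 0" unfolding aa_def by simp

lemma edge_cond_neg: "edge_cond \<beta> (-x) (-y) = edge_cond \<beta> x y"
  unfolding edge_cond_def by (auto simp: abs_if min_def)

lemma cond_neg: "cond \<beta> (-x) (-y) = cond \<beta> x y"
proof -
  have e1: "- x - 1 = -(x+1)" "-x + 1 = -(x - 1)" by simp_all
  show ?thesis unfolding cond_def e1 edge_cond_neg by (auto simp: add.commute)
qed

lemma cond_nonneg: "cond \<beta> x y \<ge> 0"
  unfolding cond_def edge_cond_def by auto

lemma cond_supp: "cond \<beta> x y \<noteq> 0 \<Longrightarrow> y \<in> {x-1, x, x+1, -x}"
  unfolding cond_def edge_cond_def by (auto split: if_splits)

lemma cond_ge2: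
  assumes "x \<ge> 2"
  shows "cond \<beta> x y = (if y = x - 1 then aa \<beta> (x-1) else if y = x then aa \<beta> (x-1) + aa \<beta> x
     else if y = x + 1 then aa \<beta> x else 0)"
  using assms unfolding cond_def edge_cond_def aa_def by (auto simp: min_def)

lemma cond_1:
  "cond \<beta> 1 y = (if y = 1 then 1/2 else if y = 2 then 1 else if y = -1 then 1/2 else 0)"
  unfolding cond_def edge_cond_def by (auto simp: min_def)

lemma cond_0: "cond \<beta> 0 y = 0"
  unfolding cond_def edge_cond_def by auto

lemma infsum_fin: "finite S \<Longrightarrow> (\<And>y. y \<notin> S \<Longrightarrow> f y = 0) \<Longrightarrow> infsum f UNIV = sum f S"
  by (subst infsum_cong_neutral[of S UNIV f f]) auto

lemma pi_w_sum: "pi_w \<beta> x = sum (cond \<beta> x) {x-1, x, x+1, -x}"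
  unfolding pi_w_def by (rule infsum_fin) (auto dest: cond_supp)

lemma pi_w_neg: "pi_w \<beta> (-x) = pi_w \<beta> x"
proof -
  have "pi_w \<beta> (-x) = infsum (\<lambda>y. cond \<beta> (-x) y) (uminus ` UNIV)"
    unfolding pi_w_def by (metis surj_def minus_minus)
  also have "\<dots> = infsum ((\<lambda>y. cond \<beta> (-x) y) \<circ> uminus) UNIV"
    by (rule infsum_reindex) simp
  also have "\<dots> = pi_w \<beta> x" unfolding pi_w_def o_def cond_neg by simp
  finally show ?thesis .
qed

lemma pi_w_ge2: "x \<ge> 2 \<Longrightarrow> pi_w \<beta> x = 2 * (aa \<beta> (x-1) + aa \<beta> x)"
  unfolding pi_w_sum by (simp add: cond_ge2)

lemma pi_w_1: "pi_w \<beta> 1 = 2"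
  unfolding pi_w_sum by (simp add: cond_1)

lemma pi_w_0: "pi_w \<beta> 0 = 0"
  unfolding pi_w_sum by (simp add: cond_0)

lemma pi_w_nonneg: "pi_w \<beta> x \<ge> 0"
  unfolding pi_w_sum by (rule sum_nonneg) (simp add: cond_nonneg)

lemma pi_w_pos_nat: "x \<ge> 1 \<Longrightarrow> pi_w \<beta> x > 0"
  by (cases "x = 1") (auto simp: pi_w_1 pi_w_ge2 aa_pos add_pos_pos)

lemma pi_w_pos: "x \<noteq> 0 \<Longrightarrow> pi_w \<beta> x > 0"
proof (cases "x > 0")
  case True then show ?thesis by (intro pi_w_pos_nat) simp
next
  case False
  assume "x \<noteq> 0"
  with False have "-x \<ge> 1" by simp
  then show ?thesis using pi_w_pos_nat[of "-x" \<beta>] by (simp add: pi_w_neg)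
qed

lemma step_ok:
  assumes "x \<noteq> 0"
  shows "(\<integral>\<^sup>+y. ennreal (cond \<beta> x y / pi_w \<beta> x) \<partial>count_space UNIV) = 1"
proof -
  have "(\<integral>\<^sup>+y. ennreal (cond \<beta> x y / pi_w \<beta> x) \<partial>count_space UNIV)
     = (\<Sum>y\<in>{x-1, x, x+1, -x}. ennreal (cond \<beta> x y / pi_w \<beta> x))"
    apply (rule nn_integral_count_space')
    subgoal by simp
    subgoal for y using cond_supp[of \<beta> x y] by (cases "cond \<beta> x y = 0") auto
    by simp
  also have "\<dots> = ennreal (\<Sum>y\<in>{x-1, x, x+1, -x}. cond \<beta> x y / pi_w \<beta> x)"
    by (rule sum_ennreal) (simp add: cond_nonneg pi_w_nonneg)
  also have "(\<Sum>y\<in>{x-1, x, x+1, -x}. cond \<beta> x y / pi_w \<beta> x) = 1"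
    using pi_w_pos[OF assms, of \<beta>] by (simp add: sum_divide_distrib[symmetric] pi_w_sum[symmetric])
  finally show ?thesis by simp
qed

lemma pmf_step:
  assumes "x \<noteq> 0"
  shows "pmf (step_pmf \<beta> x) y = cond \<beta> x y / pi_w \<beta> x"
  unfolding step_pmf_def using assms
  by (simp add: pmf_embed_pmf[OF _ step_ok] cond_nonneg pi_w_nonneg)

lemma set_step: assumes "y \<in> set_pmf (step_pmf \<beta> x)" shows "\<bar>y\<bar> \<le> \<bar>x\<bar> + 1"
proof (cases "x = 0")
  case True
  then show ?thesis using assms by (simp add: step_pmf_def) 
next
  case False
  from assms have "pmf (step_pmf \<beta> x) y \<noteq> 0" by (simp add: set_pmf_iff)
  then have "cond \<beta> x y \<noteq> 0" using False by (simp add: pmf_step)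
  then show ?thesis by (auto dest!: cond_supp)
qed



lemma L1:
  fixes x \<beta> :: real
  assumes "x \<ge> 2" "\<beta> > 1"
  shows "(x-1) powr (1-\<beta>) - x powr (1-\<beta>) \<ge> (\<beta>-1) * x powr (-\<beta>)"
proof -
  define s where "s = \<beta> - 1"
  define u where "u = x / (x-1)"
  have s0: "s > 0" using assms s_def by simp
  have u1: "u > 1" using assms unfolding u_def by (simp add: field_simps)
  have xm: "x - 1 = x / u" using assms unfolding u_def by (simp add: field_simps)
  have uu: "u powr (1-\<beta>) * u powr (\<beta>-1) = 1" using u1 by (simp add: powr_add[symmetric])
  have e1: "(x-1) powr (1-\<beta>) = x powr (-s) * u powr s"
    using assms u1 uu unfolding xm s_def by (simp add: powr_divide powr_minus field_simps)
  have "u powr s = exp (s * ln u)" using u1 by (simp add: powr_def)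
  also have "\<dots> \<ge> 1 + s * ln u" by (rule exp_ge_add_one_self)
  finally have e2: "u powr s \<ge> 1 + s * ln u" .
  have "ln (1/u) \<le> 1/u - 1" using u1 by (intro ln_le_minus_one) simp
  then have "ln u \<ge> 1 - 1/u" using u1 by (simp add: ln_div)
  also have "1 - 1/u = 1/x" using assms unfolding u_def by (simp add: field_simps)
  finally have e3: "ln u \<ge> 1/x" .
  have xs: "x powr (-s) > 0" using assms by simp
  have e4: "s * (1/x) \<le> u powr s - 1" using mult_left_mono[OF e3, of s] s0 e2 by simp
  have "(x-1) powr (1-\<beta>) - x powr (1-\<beta>) = x powr (-s) * (u powr s - 1)"
    unfolding e1 s_def by (simp add: algebra_simps)
  also have "\<dots> \<ge> x powr (-s) * (s * (1/x))"
    using e4 xs by (intro mult_left_mono) auto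
  also have "x powr (-s) * (s * (1/x)) = s * (x powr (-s) * x powr (-1))"
    using assms by (simp add: powr_minus field_simps)
  also have "x powr (-s) * x powr (-1) = x powr (-\<beta>)"
    by (subst powr_add[symmetric]) (simp add: s_def)
  finally show ?thesis unfolding s_def by simp
qed

lemma L2:
  fixes x \<beta> :: real
  assumes "x \<ge> 2" "\<beta> > 1" "\<beta> < 2"
  shows "(x-1) powr (-\<beta>) \<le> x powr (-\<beta>) * (1 + 3/(x-1))"
proof -
  define u where "u = x / (x-1)"
  have u1: "u > 1" using assms unfolding u_def by (simp add: field_simps)
  have xm: "x - 1 = x / u" using assms unfolding u_def by (simp add: field_simps)
  have e1: "(x-1) powr (-\<beta>) = x powr (-\<beta>) * u powr \<beta>"
    using assms u1 unfolding xm by (simp add: powr_divide powr_minus field_simps)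
  have "u powr \<beta> \<le> u powr 2" using u1 assms by (intro powr_mono) auto
  also have "u powr 2 = u^2" using u1 by (simp add: powr_numeral)
  also have "u^2 \<le> 1 + 3/(x-1)"
  proof -
    have p: "(1 + 3/(x-1)) * (x-1)^2 = (x-1)^2 + 3*(x-1)" using assms by (simp add: power2_eq_square field_simps)
    have r: "u^2 = x^2/(x-1)^2" unfolding u_def by (simp add: power_divide)
    have "x^2 \<le> (x-1)^2 + 3*(x-1)" using assms by (simp add: power2_eq_square algebra_simps)
    then show ?thesis unfolding r using assms p by (subst divide_le_eq) auto
  qed
  finally show ?thesis unfolding e1 using assms by (intro mult_left_mono) auto
qed

context
  fixes \<beta> :: real
  assumes b1: "1 < \<beta>" and b2: "\<beta> < 2"
begin

lemma aa_1: "aa \<beta> 1 = 1" by (simp add: aa_def)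

lemma aa_prev: "x \<ge> 2 \<Longrightarrow> aa \<beta> (x-1) \<le> aa \<beta> x * (1 + 3/(x-1))"
  using L2[of "real_of_int x" \<beta>] b1 b2 by (simp add: aa_def)

lemma aa_prev4: "x \<ge> 2 \<Longrightarrow> aa \<beta> (x-1) \<le> 4 * aa \<beta> x"
proof -
  assume x: "x \<ge> 2"
  have "3 / real_of_int (x-1) \<le> 3" using x by (simp add: field_simps)
  then have "aa \<beta> x * (1 + 3/(x-1)) \<le> aa \<beta> x * 4"
    using aa_pos[of x \<beta>] x by (intro mult_left_mono) auto
  then show ?thesis using aa_prev[OF x] by simp
qed

lemma pi_le: "x \<ge> 1 \<Longrightarrow> pi_w \<beta> x \<le> 10 * aa \<beta> x"
proof (cases "x = 1")
  case True then show ?thesis by (simp add: pi_w_1 aa_1)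
next
  case False
  assume "x \<ge> 1"
  with False have x: "x \<ge> 2" by simp
  show ?thesis using aa_prev4[OF x] aa_pos[of x \<beta>] x by (simp add: pi_w_ge2)
qed

definition GG :: "int \<Rightarrow> real" where "GG x = real_of_int x powr (1-\<beta>)"

lemma aa_tele: "x \<ge> 2 \<Longrightarrow> aa \<beta> x \<le> (GG (x-1) - GG x) / (\<beta>-1)"
  using L1[of "real_of_int x" \<beta>] b1 by (simp add: aa_def GG_def field_simps)

lemma pi_tele: "x \<ge> 2 \<Longrightarrow> pi_w \<beta> x \<le> 10/(\<beta>-1) * (GG (x-1) - GG x)"
proof -
  assume x: "x \<ge> 2"
  have "pi_w \<beta> x \<le> 10 * aa \<beta> x" using pi_le x by simp
  also have "\<dots> \<le> 10 * ((GG (x-1) - GG x) / (\<beta>-1))" using aa_tele[OF x] by (intro mult_left_mono) auto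
  also have "\<dots> = 10/(\<beta>-1) * (GG (x-1) - GG x)" by simp
  finally show ?thesis .
qed

lemma GG_nonneg: "GG x \<ge> 0" by (simp add: GG_def)

lemma tele_sum: fixes g :: "int \<Rightarrow> real" and m N :: int assumes "m - 1 \<le> N" shows "(\<Sum>x\<in>{m..N}. (g (x-1) - g x :: real)) = g (m-1) - g N"
  using assms
proof (induction N rule: int_ge_induct)
  case base then show ?case by simp
next
  case (step i)
  have "{m..i+1} = insert (i+1) {m..i}" using step.hyps by (subst add.commute, subst atLeastAtMostPlus1_int_conv) (auto simp: add.commute)
  then show ?case using step by simp
qed

lemma tail_fin_sum:
  assumes m: "m \<ge> 2" and F: "finite F" "F \<subseteq> {x. x \<ge> m}"
  shows "sum (pi_w \<beta>) F \<le> 10/(\<beta>-1) * GG (m-1)"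
proof (cases "F = {}")
  case True then show ?thesis using b1 GG_nonneg[of "m-1"] by simp
next
  case False
  define N where "N = Max F"
  have sub: "F \<subseteq> {m..N}" using F False unfolding N_def by auto
  have mN: "m \<le> N" using F False unfolding N_def by (metis Max_in mem_Collect_eq subsetD)
  have "sum (pi_w \<beta>) F \<le> sum (pi_w \<beta>) {m..N}"
    using sub by (intro sum_mono2) (auto simp: pi_w_nonneg)
  also have "\<dots> \<le> (\<Sum>x\<in>{m..N}. 10/(\<beta>-1) * (GG (x-1) - GG x))"
    using m by (intro sum_mono pi_tele) auto
  also have "\<dots> = 10/(\<beta>-1) * (\<Sum>x\<in>{m..N}. GG (x-1) - GG x)"
    by (rule sum_distrib_left[symmetric])
  also have "\<dots> = 10/(\<beta>-1) * (GG (m-1) - GG N)"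
    using mN by (subst tele_sum) auto
  also have "\<dots> \<le> 10/(\<beta>-1) * GG (m-1)" using b1 GG_nonneg[of N] by (intro mult_left_mono) auto
  finally show ?thesis .
qed

lemma pos_fin_sum:
  assumes F: "finite F" "F \<subseteq> {x. x > 0}"
  shows "sum (pi_w \<beta>) F \<le> 2 + 10/(\<beta>-1)"
proof -
  have eq: "(F \<inter> {1}) \<union> (F \<inter> {x. x \<ge> 2}) = F" using F by auto
  have "sum (pi_w \<beta>) ((F \<inter> {1}) \<union> (F \<inter> {x. x \<ge> 2})) = sum (pi_w \<beta>) (F \<inter> {1}) + sum (pi_w \<beta>) (F \<inter> {x. x \<ge> 2})"
    by (rule sum.union_disjoint) (use F in auto)
  then have "sum (pi_w \<beta>) F = sum (pi_w \<beta>) (F \<inter> {1}) + sum (pi_w \<beta>) (F \<inter> {x. x \<ge> 2})"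
    unfolding eq .
  also have "sum (pi_w \<beta>) (F \<inter> {1}) \<le> 2"
    by (cases "1 \<in> F") (auto simp: pi_w_1)
  also have "sum (pi_w \<beta>) (F \<inter> {x. x \<ge> 2}) \<le> 10/(\<beta>-1) * GG (2-1)"
    using F by (intro tail_fin_sum) auto
  finally show ?thesis by (simp add: GG_def)
qed

lemma fin_sum_bound:
  assumes F: "finite F"
  shows "sum (pi_w \<beta>) F \<le> 2 * (2 + 10/(\<beta>-1))"
proof -
  define P where "P = F \<inter> {x. x > 0}"
  define Q where "Q = F \<inter> {x. x < 0}"
  define Oz where "Oz = F \<inter> {0}"
  have eq: "P \<union> (Q \<union> Oz) = F" unfolding P_def Q_def Oz_def by auto
  have "sum (pi_w \<beta>) (P \<union> (Q \<union> Oz)) = sum (pi_w \<beta>) P + sum (pi_w \<beta>) (Q \<union> Oz)"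
    by (rule sum.union_disjoint) (use F in \<open>auto simp: P_def Q_def Oz_def\<close>)
  also have "sum (pi_w \<beta>) (Q \<union> Oz) = sum (pi_w \<beta>) Q + sum (pi_w \<beta>) Oz"
    by (rule sum.union_disjoint) (use F in \<open>auto simp: P_def Q_def Oz_def\<close>)
  finally have "sum (pi_w \<beta>) F = sum (pi_w \<beta>) P + (sum (pi_w \<beta>) Q + sum (pi_w \<beta>) Oz)"
    unfolding eq .
  also have "sum (pi_w \<beta>) Oz = 0" unfolding Oz_def by (cases "0 \<in> F") (auto simp: pi_w_0)
  also have "sum (pi_w \<beta>) Q = sum (pi_w \<beta>) (uminus ` Q)"
    by (subst sum.reindex) (auto simp: pi_w_neg inj_on_def)
  also have "\<dots> \<le> 2 + 10/(\<beta>-1)" using F unfolding Q_def by (intro pos_fin_sum) auto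
  also have "sum (pi_w \<beta>) P \<le> 2 + 10/(\<beta>-1)" using F unfolding P_def by (intro pos_fin_sum) auto
  finally show ?thesis by simp
qed

lemma pi_summable: "pi_w \<beta> summable_on A"
proof -
  have "pi_w \<beta> summable_on UNIV"
    by (rule nonneg_bdd_above_summable_on) (auto simp: pi_w_nonneg bdd_above_def intro!: exI[of _ "2 * (2 + 10/(\<beta>-1))"] fin_sum_bound)
  then show ?thesis by (rule summable_on_subset_banach) simp
qed

end


context
  fixes \<beta> :: real
  assumes b1: "1 < \<beta>" and b2: "\<beta> < 2"
begin

lemma Z_ge2: "pi_total \<beta> \<ge> 2"
proof -
  have "infsum (pi_w \<beta>) {1} \<le> infsum (pi_w \<beta>) UNIV"
    by (rule infsum_mono2) (auto simp: pi_summable[OF b1 b2] pi_w_nonneg)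
  then show ?thesis by (simp add: pi_total_def pi_w_1)
qed

lemma Z_pos: "pi_total \<beta> > 0" using Z_ge2 by simp

lemma pdiv_summable: "(\<lambda>x. pi_w \<beta> x / pi_total \<beta>) summable_on A"
proof -
  have "(\<lambda>x. pi_w \<beta> x * (1 / pi_total \<beta>)) summable_on A"
    by (rule summable_on_cmult_left[OF pi_summable[OF b1 b2]])
  then show ?thesis by simp
qed

lemma pdiv_infsum: "infsum (\<lambda>x. pi_w \<beta> x / pi_total \<beta>) A = infsum (pi_w \<beta>) A / pi_total \<beta>"
proof -
  have "infsum (\<lambda>x. pi_w \<beta> x * (1 / pi_total \<beta>)) A = infsum (pi_w \<beta>) A * (1 / pi_total \<beta>)"
    by (rule infsum_cmult_left) (rule pi_summable[OF b1 b2])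
  then show ?thesis by simp
qed

lemma pdiv_abs: "Infinite_Set_Sum.abs_summable_on (\<lambda>x. pi_w \<beta> x / pi_total \<beta>) A"
proof -
  have "(\<lambda>x. norm (pi_w \<beta> x / pi_total \<beta>)) = (\<lambda>x. pi_w \<beta> x / pi_total \<beta>)"
    using Z_pos by (auto simp: pi_w_nonneg)
  then have "Infinite_Sum.abs_summable_on (\<lambda>x. pi_w \<beta> x / pi_total \<beta>) A"
    using pdiv_summable by simp
  then show ?thesis using abs_summable_equivalent by blast
qed

lemma init_ok: "(\<integral>\<^sup>+x. ennreal (pi_w \<beta> x / pi_total \<beta>) \<partial>count_space UNIV) = 1"
proof -
  have "(\<integral>\<^sup>+x. ennreal (pi_w \<beta> x / pi_total \<beta>) \<partial>count_space UNIV)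
      = ennreal (infsetsum (\<lambda>x. pi_w \<beta> x / pi_total \<beta>) UNIV)"
    by (rule nn_integral_conv_infsetsum[OF pdiv_abs]) (use Z_pos in \<open>simp add: pi_w_nonneg\<close>)
  also have "infsetsum (\<lambda>x. pi_w \<beta> x / pi_total \<beta>) UNIV = infsum (\<lambda>x. pi_w \<beta> x / pi_total \<beta>) UNIV"
    by (rule infsetsum_infsum[OF pdiv_abs])
  also have "\<dots> = 1" unfolding pdiv_infsum using Z_pos by (simp add: pi_total_def)
  finally show ?thesis by simp
qed

lemma pmf_init: "pmf (init_pmf \<beta>) x = pi_w \<beta> x / pi_total \<beta>"
  unfolding init_pmf_def using Z_pos
  by (subst pmf_embed_pmf[OF _ init_ok]) (auto simp: pi_w_nonneg)

lemma meas_init: "measure_pmf.prob (init_pmf \<beta>) S = infsum (pi_w \<beta>) S / pi_total \<beta>"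
proof -
  have "measure_pmf.prob (init_pmf \<beta>) S = infsetsum (pmf (init_pmf \<beta>)) S"
    by (rule measure_pmf_conv_infsetsum)
  also have "pmf (init_pmf \<beta>) = (\<lambda>x. pi_w \<beta> x / pi_total \<beta>)" by (rule ext) (rule pmf_init)
  also have "infsetsum (\<lambda>x. pi_w \<beta> x / pi_total \<beta>) S = infsum (\<lambda>x. pi_w \<beta> x / pi_total \<beta>) S"
    by (rule infsetsum_infsum[OF pdiv_abs])
  finally show ?thesis by (simp add: pdiv_infsum)
qed

lemma half: "measure_pmf.prob (init_pmf \<beta>) {x. 0 < x} = 1/2"
proof -
  let ?P = "{x::int. 0 < x}" and ?N = "{x::int. x < 0}"
  have U: "UNIV = ?P \<union> (?N \<union> {0})" by auto
  have "pi_total \<beta> = infsum (pi_w \<beta>) (?P \<union> (?N \<union> {0}))" unfolding pi_total_def U[symmetric] ..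
  also have "\<dots> = infsum (pi_w \<beta>) ?P + infsum (pi_w \<beta>) (?N \<union> {0})"
    by (rule infsum_Un_disjoint) (auto intro: pi_summable[OF b1 b2])
  also have "infsum (pi_w \<beta>) (?N \<union> {0}) = infsum (pi_w \<beta>) ?N + infsum (pi_w \<beta>) {0}"
    by (rule infsum_Un_disjoint) (auto intro: pi_summable[OF b1 b2])
  also have "infsum (pi_w \<beta>) {0} = 0" by (simp add: pi_w_0)
  also have "?N = uminus ` ?P" by (auto simp: image_iff intro!: exI[of _ "-x" for x])
  also have "infsum (pi_w \<beta>) (uminus ` ?P) = infsum (pi_w \<beta> \<circ> uminus) ?P"
    by (rule infsum_reindex) (simp add: inj_on_def)
  also have "pi_w \<beta> \<circ> uminus = pi_w \<beta>" by (rule ext) (simp add: pi_w_neg)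
  finally have "pi_total \<beta> = 2 * infsum (pi_w \<beta>) ?P" by simp
  then show ?thesis using Z_pos by (simp add: meas_init)
qed

lemma tail_upper:
  assumes m: "m \<ge> 2"
  shows "measure_pmf.prob (init_pmf \<beta>) {x. x \<ge> m} \<le> 10/(\<beta>-1) * GG \<beta> (m-1) / pi_total \<beta>"
proof -
  have "infsum (pi_w \<beta>) {x. x \<ge> m} \<le> 10/(\<beta>-1) * GG \<beta> (m-1)"
    by (rule infsum_le_finite_sums[OF pi_summable[OF b1 b2]]) (rule tail_fin_sum[OF b1 b2 m])
  then show ?thesis unfolding meas_init by (rule divide_right_mono) (use Z_pos in auto)
qed

lemma block_lower:
  assumes j: "j \<ge> 1"
  shows "measure_pmf.prob (init_pmf \<beta>) {2*j..4*j} \<ge> real_of_int (4*j) powr (1-\<beta>) / pi_total \<beta>"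
proof -
  have "infsum (pi_w \<beta>) {2*j..4*j} = sum (pi_w \<beta>) {2*j..4*j}" by simp
  also have "sum (pi_w \<beta>) {2*j..4*j} \<ge> sum (\<lambda>_. 2 * aa \<beta> (4*j)) {2*j..4*j}"
  proof (rule sum_mono)
    fix x assume x: "x \<in> {2*j..4*j}"
    then have x2: "x \<ge> 2" using j by simp
    have "aa \<beta> (4*j) \<le> aa \<beta> x" unfolding aa_def using x x2 b1
      by (intro powr_mono2') auto
    also have "aa \<beta> x \<le> aa \<beta> (x-1) + aa \<beta> x" using aa_pos[of "x-1" \<beta>] x2 by simp
    finally show "2 * aa \<beta> (4*j) \<le> pi_w \<beta> x" using x2 by (simp add: pi_w_ge2)
  qed
  also have "sum (\<lambda>_. 2 * aa \<beta> (4*j)) {2*j..4*j} = real_of_int (2*j+1) * (2 * aa \<beta> (4*j))"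
    using j by simp
  finally have s1: "infsum (pi_w \<beta>) {2*j..4*j} \<ge> real_of_int (2*j+1) * (2 * aa \<beta> (4*j))" .
  have "real_of_int (4*j) powr (1-\<beta>) = real_of_int (4*j) * aa \<beta> (4*j)"
    unfolding aa_def using j by (simp add: powr_diff powr_minus_divide)
  also have "\<dots> \<le> real_of_int (2*j+1) * (2 * aa \<beta> (4*j))"
    using aa_pos[of "4*j" \<beta>] j by (simp add: algebra_simps)
  finally have "real_of_int (4*j) powr (1-\<beta>) \<le> infsum (pi_w \<beta>) {2*j..4*j}" using s1 by simp
  then show ?thesis unfolding meas_init using Z_pos by (simp add: divide_right_mono)
qed

end


lemma path_supp: "xs \<in> set_pmf (path_pmf \<beta> t) \<Longrightarrow> xs \<noteq> [] \<and> \<bar>last xs\<bar> \<le> \<bar>hd xs\<bar> + int t"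
proof (induction t arbitrary: xs)
  case 0
  then show ?case by auto
next
  case (Suc t)
  then obtain ys y where ys: "ys \<in> set_pmf (path_pmf \<beta> t)" and y: "y \<in> set_pmf (step_pmf \<beta> (last ys))"
    and xs: "xs = ys @ [y]" by auto
  from Suc.IH[OF ys] have "ys \<noteq> []" "\<bar>last ys\<bar> \<le> \<bar>hd ys\<bar> + int t" by auto
  moreover have "\<bar>y\<bar> \<le> \<bar>last ys\<bar> + 1" by (rule set_step[OF y])
  ultimately show ?case using xs by auto
qed

lemma hd_path: "map_pmf hd (path_pmf \<beta> t) = init_pmf \<beta>"
proof (induction t)
  case 0
  then show ?case by (simp add: map_pmf_comp)
next
  case (Suc t)
  have "map_pmf hd (path_pmf \<beta> (Suc t)) =
     bind_pmf (path_pmf \<beta> t) (\<lambda>xs. map_pmf (\<lambda>y. hd (xs @ [y])) (step_pmf \<beta> (last xs)))"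
    by (simp add: map_bind_pmf map_pmf_comp)
  also have "\<dots> = bind_pmf (path_pmf \<beta> t) (\<lambda>xs. return_pmf (hd xs))"
  proof (rule bind_pmf_cong[OF refl])
    fix xs assume "xs \<in> set_pmf (path_pmf \<beta> t)"
    then have "xs \<noteq> []" using path_supp by blast
    then show "map_pmf (\<lambda>y. hd (xs @ [y])) (step_pmf \<beta> (last xs)) = return_pmf (hd xs)" by simp
  qed
  also have "\<dots> = map_pmf hd (path_pmf \<beta> t)" by (simp add: map_pmf_def)
  finally show ?case using Suc by simp
qed

definition good :: "int \<Rightarrow> int set \<Rightarrow> int list \<Rightarrow> bool" where
  "good k A xs \<longleftrightarrow> hd xs \<in> A \<and> (\<forall>x\<in>set xs. k < x)"

definition NN :: "real \<Rightarrow> int \<Rightarrow> int set \<Rightarrow> nat \<Rightarrow> (int \<Rightarrow> real) \<Rightarrow> ennreal" where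
  "NN \<beta> k A t h = (\<integral>\<^sup>+xs. (if good k A xs then ennreal (h (last xs)) else 0) \<partial>measure_pmf (path_pmf \<beta> t))"

lemma NN_Suc: "NN \<beta> k A (Suc t) h = (\<integral>\<^sup>+xs. (if good k A xs then
     (\<integral>\<^sup>+y. ennreal (if k < y then h y else 0) \<partial>measure_pmf (step_pmf \<beta> (last xs))) else 0) \<partial>measure_pmf (path_pmf \<beta> t))"
  unfolding NN_def
proof (simp only: path_pmf.simps nn_integral_bind_pmf nn_integral_map_pmf, rule nn_integral_cong_AE)
  show "AE xs in measure_pmf (path_pmf \<beta> t).
     (\<integral>\<^sup>+y. (if good k A (xs @ [y]) then ennreal (h (last (xs @ [y]))) else 0) \<partial>measure_pmf (step_pmf \<beta> (last xs))) =
     (if good k A xs then (\<integral>\<^sup>+y. ennreal (if k < y then h y else 0) \<partial>measure_pmf (step_pmf \<beta> (last xs))) else 0)"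
  proof (rule AE_pmfI)
    fix xs assume "xs \<in> set_pmf (path_pmf \<beta> t)"
    then have ne: "xs \<noteq> []" using path_supp by blast
    have "\<And>y. (if good k A (xs @ [y]) then ennreal (h (last (xs @ [y]))) else 0) =
       (if good k A xs then ennreal (if k < y then h y else 0) else 0)"
      using ne by (auto simp: good_def)
    then show "(\<integral>\<^sup>+y. (if good k A (xs @ [y]) then ennreal (h (last (xs @ [y]))) else 0) \<partial>measure_pmf (step_pmf \<beta> (last xs))) =
     (if good k A xs then (\<integral>\<^sup>+y. ennreal (if k < y then h y else 0) \<partial>measure_pmf (step_pmf \<beta> (last xs))) else 0)"
      by simp
  qed
qed

lemma NN_0: "NN \<beta> k A 0 h = (\<integral>\<^sup>+x. (if x \<in> A \<and> k < x then ennreal (h x) else 0) \<partial>measure_pmf (init_pmf \<beta>))"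
  unfolding NN_def good_def by (simp, intro nn_integral_cong) simp

lemma int_step_ge2:
  assumes x: "x \<ge> 2" and g: "\<And>y. g y \<ge> 0"
  shows "(\<integral>\<^sup>+y. ennreal (g y) \<partial>measure_pmf (step_pmf \<beta> x)) =
    ennreal ((aa \<beta> (x-1) * g (x-1) + (aa \<beta> (x-1) + aa \<beta> x) * g x + aa \<beta> x * g (x+1)) / (2 * (aa \<beta> (x-1) + aa \<beta> x)))"
proof -
  have x0: "x \<noteq> 0" using x by simp
  have "(\<integral>\<^sup>+y. ennreal (g y) \<partial>measure_pmf (step_pmf \<beta> x)) = (\<Sum>y\<in>{x-1,x,x+1}. ennreal (g y) * pmf (step_pmf \<beta> x) y)"
  proof (rule nn_integral_measure_pmf_support)
    fix y assume "y \<in> set_pmf (step_pmf \<beta> x)" "y \<notin> {x-1,x,x+1}"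
    then have False using x by (simp add: set_pmf_iff pmf_step[OF x0] cond_ge2)
    then show "ennreal (g y) = 0" ..
  qed auto
  also have "\<dots> = (\<Sum>y\<in>{x-1,x,x+1}. ennreal (g y * pmf (step_pmf \<beta> x) y))"
    by (simp add: ennreal_mult'' g)
  also have "\<dots> = ennreal (\<Sum>y\<in>{x-1,x,x+1}. g y * pmf (step_pmf \<beta> x) y)"
    by (rule sum_ennreal) (simp add: g)
  also have "(\<Sum>y\<in>{x-1,x,x+1}. g y * pmf (step_pmf \<beta> x) y) =
    (aa \<beta> (x-1) * g (x-1) + (aa \<beta> (x-1) + aa \<beta> x) * g x + aa \<beta> x * g (x+1)) / (2 * (aa \<beta> (x-1) + aa \<beta> x))"
    using x by (simp add: pmf_step[OF x0] cond_ge2 pi_w_ge2 add_divide_distrib mult_ac add_ac)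
  finally show ?thesis .
qed

lemma int_step_1:
  assumes g: "\<And>y. g y \<ge> 0"
  shows "(\<integral>\<^sup>+y. ennreal (g y) \<partial>measure_pmf (step_pmf \<beta> 1)) = ennreal ((g 1 / 2 + g 2 + g (-1) / 2) / 2)"
proof -
  have "(\<integral>\<^sup>+y. ennreal (g y) \<partial>measure_pmf (step_pmf \<beta> 1)) = (\<Sum>y\<in>{1,2,-1}. ennreal (g y) * pmf (step_pmf \<beta> 1) y)"
  proof (rule nn_integral_measure_pmf_support)
    fix y assume "y \<in> set_pmf (step_pmf \<beta> 1)" "y \<notin> {1,2,-1}"
    then have False by (simp add: set_pmf_iff pmf_step cond_1)
    then show "ennreal (g y) = 0" ..
  qed auto
  also have "\<dots> = (\<Sum>y\<in>{1,2,-1}. ennreal (g y * pmf (step_pmf \<beta> 1) y))"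
    by (simp add: ennreal_mult'' g)
  also have "\<dots> = ennreal (\<Sum>y\<in>{1,2,-1}. g y * pmf (step_pmf \<beta> 1) y)"
    by (rule sum_ennreal) (simp add: g)
  also have "(\<Sum>y\<in>{1,2,-1}. g y * pmf (step_pmf \<beta> 1) y) = (g 1 / 2 + g 2 + g (-1) / 2) / 2"
    by (simp add: pmf_step cond_1 pi_w_1)
  finally show ?thesis .
qed



lemma drift_real:
  fixes a1 a0 KK F X :: real
  assumes "a1 > 0" "a0 > 0" "a1 \<le> 4*a0" "KK*(a1*(X-1) - a0*X) \<ge> 16*a0"
  shows "(a1*(F - KK*(X-1)) + (a1+a0)*F + a0*(F + KK*X))/(2*(a1+a0)) \<le> F - 1"
proof -
  have "a1*(F - KK*(X-1)) + (a1+a0)*F + a0*(F + KK*X) = 2*(a1+a0)*F - KK*(a1*(X-1) - a0*X)"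
    by (simp add: algebra_simps)
  also have "\<dots> \<le> 2*(a1+a0)*(F-1)" using assms by (simp add: algebra_simps)
  finally show ?thesis using assms by (simp add: divide_le_eq mult.commute)
qed

lemma psi_real:
  fixes a1 a0 d X :: real
  assumes "a1 > 0" "a0 > 0" "a1 \<ge> a0" "(a1 - a0)*(X-1) \<le> 3*a0" "0 \<le> d" "d \<le> X - 1"
  shows "(a1*(d+1)^2 + (a1+a0)*d^2 + a0*(d-1)^2)/(2*(a1+a0)) \<le> d^2 + 5"
proof -
  have "d*(a1-a0) \<le> (X-1)*(a1-a0)" using assms by (intro mult_right_mono) auto
  then have k: "2*d*(a1-a0) \<le> 6*a0" using assms by (simp add: algebra_simps)
  have "a1*(d+1)^2 + (a1+a0)*d^2 + a0*(d-1)^2 = 2*(a1+a0)*d^2 + a1*(2*d+1) + a0*(1-2*d)"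
    by (simp add: algebra_simps power2_eq_square)
  also have "\<dots> \<le> 2*(a1+a0)*(d^2+5)" using k assms by (simp add: algebra_simps)
  finally show ?thesis using assms by (simp add: divide_le_eq mult.commute)
qed

definition psi :: "int \<Rightarrow> int \<Rightarrow> real" where "psi j y = (real_of_int (max 0 (2*j - y)))^2"

context
  fixes \<beta> :: real
  assumes b1: "1 < \<beta>" and b2: "\<beta> < 2"
begin

definition KK :: real where "KK = 16/(\<beta>-1)"
definition A0 :: real where "A0 = 2*KK + 4"
definition ff :: "int \<Rightarrow> real" where "ff y = A0 + KK * real_of_int y * (real_of_int y - 1) / 2"

lemma KK_pos: "KK > 0" using b1 by (simp add: KK_def)

lemma ff_ge: "ff y \<ge> A0"
proof -
  have "real_of_int y * (real_of_int y - 1) \<ge> 0"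
    by (cases "y \<ge> 1") (auto simp: mult_nonpos_nonpos zero_le_mult_iff)
  then have "KK * real_of_int y * (real_of_int y - 1) \<ge> 0" using KK_pos by (simp add: mult.assoc)
  then show ?thesis unfolding ff_def by simp
qed

lemma A0_ge: "A0 \<ge> 4" using KK_pos by (simp add: A0_def)

lemma ff_nonneg: "ff y \<ge> 0" using ff_ge[of y] A0_ge by linarith

lemma aa_mono: "1 \<le> x \<Longrightarrow> x \<le> y \<Longrightarrow> aa \<beta> y \<le> aa \<beta> x"
  unfolding aa_def using b1 by (intro powr_mono2') auto

lemma GG_aa: "y \<ge> 1 \<Longrightarrow> GG \<beta> y = aa \<beta> y * real_of_int y"
  using b1 b2 by (simp add: GG_def aa_def powr_diff powr_minus_divide)

lemma drift_f:
  assumes x: "x \<ge> 1"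
  shows "(\<integral>\<^sup>+y. ennreal (if 0 < y then ff y else 0) \<partial>measure_pmf (step_pmf \<beta> x)) + 1 \<le> ennreal (ff x)"
proof -
  have gnn: "\<And>y. (if 0 < y then ff y else 0) \<ge> 0" by (simp add: ff_nonneg)
  have "\<exists>E. (\<integral>\<^sup>+y. ennreal (if 0 < y then ff y else 0) \<partial>measure_pmf (step_pmf \<beta> x)) = ennreal E \<and> E \<le> ff x - 1 \<and> E \<ge> 0"
  proof (cases "x = 1")
    case True
    have e: "(\<integral>\<^sup>+y. ennreal (if 0 < y then ff y else 0) \<partial>measure_pmf (step_pmf \<beta> x)) = ennreal ((ff 1 / 2 + ff 2 + 0 / 2) / 2)"
      unfolding True by (subst int_step_1[OF gnn]) simp
    have "ff 1 = A0" "ff 2 = A0 + KK" by (simp_all add: ff_def)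
    then have "(ff 1 / 2 + ff 2 + 0 / 2) / 2 \<le> ff x - 1" using True by (simp add: A0_def)
    moreover have "(ff 1 / 2 + ff 2 + 0 / 2) / 2 \<ge> 0" using ff_ge[of 1] ff_ge[of 2] A0_ge by simp
    ultimately show ?thesis using e by blast
  next
    case False
    with x have x2: "x \<ge> 2" by simp
    define a1 where "a1 = aa \<beta> (x-1)"
    define a0 where "a0 = aa \<beta> x"
    define X where "X = real_of_int x"
    have a1p: "a1 > 0" "a0 > 0" using x2 aa_pos unfolding a1_def a0_def by auto
    have a14: "a1 \<le> 4*a0" using aa_prev4[OF b1 b2 x2] unfolding a1_def a0_def by simp
    have t: "a0 \<le> (GG \<beta> (x-1) - GG \<beta> x) / (\<beta>-1)" using aa_tele[OF b1 b2 x2] unfolding a0_def by simp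
    have "GG \<beta> (x-1) - GG \<beta> x = a1*(X-1) - a0*X"
      using x2 unfolding a1_def a0_def X_def by (simp add: GG_aa)
    with t have "(\<beta>-1)*a0 \<le> a1*(X-1) - a0*X" using b1 by (simp add: field_simps)
    then have "KK*((\<beta>-1)*a0) \<le> KK*(a1*(X-1) - a0*X)" using KK_pos by (intro mult_left_mono) auto
    moreover have "KK*((\<beta>-1)*a0) = 16*a0" using b1 by (simp add: KK_def)
    ultimately have kk: "KK*(a1*(X-1) - a0*X) \<ge> 16*a0" by simp
    have fm: "ff (x-1) = ff x - KK*(X-1)" "ff (x+1) = ff x + KK*X"
      unfolding ff_def X_def by (simp_all add: field_simps)
    define E where "E = (a1 * ff (x-1) + (a1+a0) * ff x + a0 * ff (x+1)) / (2*(a1+a0))"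
    have e: "(\<integral>\<^sup>+y. ennreal (if 0 < y then ff y else 0) \<partial>measure_pmf (step_pmf \<beta> x)) = ennreal E"
      unfolding E_def a1_def a0_def using x2 by (subst int_step_ge2[OF x2 gnn]) simp
    have "E \<le> ff x - 1" unfolding E_def fm by (rule drift_real[OF a1p a14 kk])
    moreover have "E \<ge> 0" unfolding E_def using a1p gnn x2
      by (intro divide_nonneg_pos add_nonneg_nonneg mult_nonneg_nonneg) (auto simp: ff_nonneg)
    ultimately show ?thesis using e by blast
  qed
  then obtain E where e: "(\<integral>\<^sup>+y. ennreal (if 0 < y then ff y else 0) \<partial>measure_pmf (step_pmf \<beta> x)) = ennreal E"
    and E: "E \<le> ff x - 1" "E \<ge> 0" by blast
  have "ennreal E + 1 = ennreal (E + 1)" using E by (simp add: ennreal_plus)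
  also have "\<dots> \<le> ennreal (ff x)" using E by (intro ennreal_leI) simp
  finally show ?thesis unfolding e .
qed


lemma Ef_bound:
  assumes j: "j \<ge> 1" and x: "x > j"
  shows "(aa \<beta> (x-1) * psi j (x-1) + (aa \<beta> (x-1) + aa \<beta> x) * psi j x + aa \<beta> x * psi j (x+1))
      / (2 * (aa \<beta> (x-1) + aa \<beta> x)) \<le> psi j x + 5"
proof -
  have x2: "x \<ge> 2" using j x by simp
  define a1 where "a1 = aa \<beta> (x-1)"
  define a0 where "a0 = aa \<beta> x"
  have a1p: "a1 > 0" "a0 > 0" using x2 aa_pos unfolding a1_def a0_def by auto
  have main: "(a1 * psi j (x-1) + (a1+a0) * psi j x + a0 * psi j (x+1)) / (2*(a1+a0)) \<le> psi j x + 5"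
  proof (cases "x \<ge> 2*j + 1")
    case True
    then show ?thesis using a1p by (simp add: psi_def)
  next
    case False
    show ?thesis
    proof (cases "x = 2*j")
      case True
      then have "(a1 * psi j (x-1) + (a1+a0) * psi j x + a0 * psi j (x+1)) / (2*(a1+a0)) = a1 / (2*(a1+a0))"
        by (simp add: psi_def)
      also have "\<dots> \<le> 1" using a1p by (simp add: divide_le_eq)
      finally show ?thesis using True by (simp add: psi_def)
    next
      case False2: False
      with False have xl: "x < 2*j" by simp
      define d where "d = real_of_int (2*j - x)"
      have ps: "psi j (x-1) = (d+1)^2" "psi j x = d^2" "psi j (x+1) = (d-1)^2"
        using xl unfolding psi_def d_def by (simp_all add: algebra_simps)
      have ge: "a1 \<ge> a0" unfolding a1_def a0_def using x2 by (intro aa_mono) auto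
      have "a1 \<le> a0 * (1 + 3/(real_of_int x - 1))" using aa_prev[OF b1 b2 x2] unfolding a1_def a0_def by simp
      then have "(a1 - a0)*(real_of_int x - 1) \<le> 3*a0" using x2 by (simp add: field_simps)
      then show ?thesis unfolding ps
        by (intro psi_real[OF a1p ge]) (use xl x in \<open>auto simp: d_def\<close>)
    qed
  qed
  then show ?thesis unfolding a1_def a0_def .
qed

lemma drift_psi:
  assumes j: "j \<ge> 1" and x: "x > j"
  shows "(\<integral>\<^sup>+y. ennreal (if j < y then psi j y else 0) \<partial>measure_pmf (step_pmf \<beta> x)) + ennreal ((real_of_int j)^2)
    \<le> ennreal (psi j x + 5) + ennreal ((real_of_int j)^2) * (\<integral>\<^sup>+y. ennreal (if j < y then 1 else 0) \<partial>measure_pmf (step_pmf \<beta> x))"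
proof -
  have x2: "x \<ge> 2" using j x by simp
  define a1 where "a1 = aa \<beta> (x-1)"
  define a0 where "a0 = aa \<beta> x"
  have a1p: "a1 > 0" "a0 > 0" using x2 aa_pos unfolding a1_def a0_def by auto
  have pnn: "\<And>y. psi j y \<ge> 0" by (simp add: psi_def)
  define I1 where "I1 = (if j < x - 1 then a1 * psi j (x-1) else 0)"
  define I2 where "I2 = (if j < x - 1 then a1 else 0)"
  define E1 where "E1 = (I1 + (a1+a0) * psi j x + a0 * psi j (x+1)) / (2*(a1+a0))"
  define E2 where "E2 = (I2 + (a1+a0) + a0) / (2*(a1+a0))"
  have e1: "(\<integral>\<^sup>+y. ennreal (if j < y then psi j y else 0) \<partial>measure_pmf (step_pmf \<beta> x)) = ennreal E1"
    by (subst int_step_ge2[OF x2]) (use pnn x in \<open>auto simp: E1_def I1_def a1_def a0_def\<close>)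
  have e2: "(\<integral>\<^sup>+y. ennreal (if j < y then 1 else 0) \<partial>measure_pmf (step_pmf \<beta> x)) = ennreal E2"
    by (subst int_step_ge2[OF x2]) (use x in \<open>auto simp: E2_def I2_def a1_def a0_def\<close>)
  have E1nn: "E1 \<ge> 0" unfolding E1_def I1_def using a1p pnn
    by (intro divide_nonneg_pos add_nonneg_nonneg mult_nonneg_nonneg) auto
  have E2nn: "E2 \<ge> 0" unfolding E2_def I2_def using a1p
    by (intro divide_nonneg_pos add_nonneg_nonneg mult_nonneg_nonneg) auto
  have Ef: "(a1 * psi j (x-1) + (a1+a0) * psi j x + a0 * psi j (x+1)) / (2*(a1+a0)) \<le> psi j x + 5"
    using Ef_bound[OF j x] unfolding a1_def a0_def .
  have key: "E1 + (real_of_int j)^2 \<le> psi j x + 5 + (real_of_int j)^2 * E2"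
  proof (cases "j < x - 1")
    case True
    have "E2 = 1" unfolding E2_def I2_def using True a1p by simp
    moreover have "E1 = (a1 * psi j (x-1) + (a1+a0) * psi j x + a0 * psi j (x+1)) / (2*(a1+a0))"
      unfolding E1_def I1_def using True by simp
    ultimately show ?thesis using Ef by simp
  next
    case False
    then have xj: "x - 1 = j" using x by simp
    have pj: "psi j (x-1) = (real_of_int j)^2" unfolding psi_def xj using j by simp
    define D where "D = 2*(a1+a0)"
    define Ef where "Ef = (a1 * psi j (x-1) + (a1+a0) * psi j x + a0 * psi j (x+1)) / (2*(a1+a0))"
    have dpos: "D > 0" using a1p by (simp add: D_def)
    have m1: "E1 * D = (a1+a0) * psi j x + a0 * psi j (x+1)" using dpos False by (simp add: E1_def I1_def D_def)
    have m2: "E2 * D = a1 + 2*a0" using dpos False by (simp add: E2_def I2_def D_def)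
    have m3: "Ef * D = a1 * (real_of_int j)^2 + (a1+a0) * psi j x + a0 * psi j (x+1)" using dpos by (simp add: Ef_def D_def pj)
    have "(E1 + (real_of_int j)^2) * D = ((real_of_int j)^2 * E2 + Ef) * D"
      by (simp only: distrib_right mult.assoc m1 m2 m3) (simp add: algebra_simps D_def)
    then have "E1 + (real_of_int j)^2 = (real_of_int j)^2 * E2 + Ef" using dpos by simp
    then have "E1 + (real_of_int j)^2 = (real_of_int j)^2 * E2 + (a1 * psi j (x-1) + (a1+a0) * psi j x + a0 * psi j (x+1)) / (2*(a1+a0))"
      by (simp add: Ef_def)
    then show ?thesis using Ef by simp
  qed
  have "ennreal E1 + ennreal ((real_of_int j)^2) = ennreal (E1 + (real_of_int j)^2)"
    using E1nn by (simp add: ennreal_plus)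
  also have "\<dots> \<le> ennreal (psi j x + 5 + (real_of_int j)^2 * E2)" by (rule ennreal_leI[OF key])
  also have "\<dots> = ennreal (psi j x + 5) + ennreal ((real_of_int j)^2) * ennreal E2"
    using E2nn pnn[of x] by (simp add: ennreal_plus ennreal_mult)
  finally show ?thesis unfolding e1 e2 .
qed

end


lemma NN_one: "NN \<beta> k A t (\<lambda>_. 1) = ennreal (measure_pmf.prob (path_pmf \<beta> t) {xs. good k A xs})"
proof -
  have "NN \<beta> k A t (\<lambda>_. 1) = (\<integral>\<^sup>+xs. indicator {xs. good k A xs} xs \<partial>measure_pmf (path_pmf \<beta> t))"
    unfolding NN_def by (intro nn_integral_cong) (simp split: split_indicator)
  also have "\<dots> = emeasure (measure_pmf (path_pmf \<beta> t)) {xs. good k A xs}" by simp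
  finally show ?thesis by (simp add: measure_pmf.emeasure_eq_measure)
qed

lemma if_add: "(if b then (x::ennreal) + y else 0) = (if b then x else 0) + (if b then y else 0)" by simp
lemma if_cmult: "(if b then (c::ennreal) * y else 0) = c * (if b then y else 0)" by simp

lemma nn_if_add: "(\<integral>\<^sup>+x. (if b x then f x + g x else 0) \<partial>measure_pmf M) =
   (\<integral>\<^sup>+x. (if b x then f x else 0) \<partial>measure_pmf M) + (\<integral>\<^sup>+x. (if b x then g x else 0) \<partial>measure_pmf M)"
  by (simp only: if_add, rule nn_integral_add) auto

lemma nn_if_cmult: "(\<integral>\<^sup>+x. (if b x then c * f x else 0) \<partial>measure_pmf M) =
   c * (\<integral>\<^sup>+x. (if b x then f x else 0) \<partial>measure_pmf M)"
  by (simp only: if_cmult, rule nn_integral_cmult) simp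

lemma NN_cmult1: "c * NN \<beta> k A t (\<lambda>_. 1) = (\<integral>\<^sup>+xs. (if good k A xs then c else 0) \<partial>measure_pmf (path_pmf \<beta> t))"
proof -
  have e: "NN \<beta> k A t (\<lambda>_. 1) = (\<integral>\<^sup>+xs. (if good k A xs then 1 else 0) \<partial>measure_pmf (path_pmf \<beta> t))"
    unfolding NN_def by (intro nn_integral_cong) simp
  have "c * (\<integral>\<^sup>+xs. (if good k A xs then 1 else 0) \<partial>measure_pmf (path_pmf \<beta> t))
     = (\<integral>\<^sup>+xs. c * (if good k A xs then 1 else 0) \<partial>measure_pmf (path_pmf \<beta> t))"
    by (rule nn_integral_cmult[symmetric]) simp
  also have "\<dots> = (\<integral>\<^sup>+xs. (if good k A xs then c else 0) \<partial>measure_pmf (path_pmf \<beta> t))"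
    by (intro nn_integral_cong) simp
  finally show ?thesis unfolding e .
qed

lemma NN_mono1: "NN \<beta> k A (Suc t) (\<lambda>_. 1) \<le> NN \<beta> k A t (\<lambda>_. 1)"
proof -
  have "NN \<beta> k A (Suc t) (\<lambda>_. 1) \<le> (\<integral>\<^sup>+xs. (if good k A xs then 1 else 0) \<partial>measure_pmf (path_pmf \<beta> t))"
    unfolding NN_Suc
  proof (intro nn_integral_mono)
    fix xs
    have "(\<integral>\<^sup>+y. ennreal (if k < y then 1 else 0) \<partial>measure_pmf (step_pmf \<beta> (last xs)))
        \<le> (\<integral>\<^sup>+y. 1 \<partial>measure_pmf (step_pmf \<beta> (last xs)))"
      by (intro nn_integral_mono) auto
    also have "\<dots> = 1" by simp
    finally show "(if good k A xs then \<integral>\<^sup>+y. ennreal (if k < y then 1 else 0) \<partial>measure_pmf (step_pmf \<beta> (last xs)) else 0)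
         \<le> (if good k A xs then 1 else 0)" by simp
  qed
  also have "\<dots> = NN \<beta> k A t (\<lambda>_. 1)" unfolding NN_def by (intro nn_integral_cong) simp
  finally show ?thesis .
qed

lemma NN_anti1: "s \<le> t \<Longrightarrow> NN \<beta> k A t (\<lambda>_. 1) \<le> NN \<beta> k A s (\<lambda>_. 1)"
proof (induction t rule: dec_induct)
  case base then show ?case by simp
next
  case (step n) then show ?case using NN_mono1[of \<beta> k A n] by simp
qed

lemma last_good: "xs \<in> set_pmf (path_pmf \<beta> t) \<Longrightarrow> good k A xs \<Longrightarrow> k < last xs"
  using path_supp[of xs \<beta> t] by (auto simp: good_def)

context
  fixes \<beta> :: real
  assumes b1: "1 < \<beta>" and b2: "\<beta> < 2"
begin

lemma up_step: "NN \<beta> 0 A (Suc t) (ff \<beta>) + NN \<beta> 0 A t (\<lambda>_. 1) \<le> NN \<beta> 0 A t (ff \<beta>)"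
proof -
  have "NN \<beta> 0 A (Suc t) (ff \<beta>) + NN \<beta> 0 A t (\<lambda>_. 1) =
    (\<integral>\<^sup>+xs. (if good 0 A xs then (\<integral>\<^sup>+y. ennreal (if 0 < y then ff \<beta> y else 0) \<partial>measure_pmf (step_pmf \<beta> (last xs))) + 1 else 0)
      \<partial>measure_pmf (path_pmf \<beta> t))"
    unfolding nn_if_add NN_Suc by (subst NN_cmult1[of 1, simplified]) simp
  also have "\<dots> \<le> NN \<beta> 0 A t (ff \<beta>)"
    unfolding NN_def
  proof (rule nn_integral_mono_AE, rule AE_pmfI)
    fix xs assume xs: "xs \<in> set_pmf (path_pmf \<beta> t)"
    show "(if good 0 A xs then (\<integral>\<^sup>+y. ennreal (if 0 < y then ff \<beta> y else 0) \<partial>measure_pmf (step_pmf \<beta> (last xs))) + 1 else 0)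
       \<le> (if good 0 A xs then ennreal (ff \<beta> (last xs)) else 0)"
      using last_good[OF xs, of 0 A] drift_f[OF b1 b2, of "last xs"] by auto
  qed
  finally show ?thesis .
qed

lemma up_cum: "NN \<beta> 0 A t (ff \<beta>) + (\<Sum>s<t. NN \<beta> 0 A s (\<lambda>_. 1)) \<le> NN \<beta> 0 A 0 (ff \<beta>)"
proof (induction t)
  case 0 then show ?case by simp
next
  case (Suc t)
  have "NN \<beta> 0 A (Suc t) (ff \<beta>) + (\<Sum>s<Suc t. NN \<beta> 0 A s (\<lambda>_. 1))
     = (NN \<beta> 0 A (Suc t) (ff \<beta>) + NN \<beta> 0 A t (\<lambda>_. 1)) + (\<Sum>s<t. NN \<beta> 0 A s (\<lambda>_. 1))"
    by (simp add: add_ac)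
  also have "\<dots> \<le> NN \<beta> 0 A t (ff \<beta>) + (\<Sum>s<t. NN \<beta> 0 A s (\<lambda>_. 1))"
    by (intro add_right_mono up_step)
  also have "\<dots> \<le> NN \<beta> 0 A 0 (ff \<beta>)" by (rule Suc.IH)
  finally show ?case .
qed

lemma up_final: "of_nat (Suc t) * NN \<beta> 0 A t (\<lambda>_. 1) \<le> NN \<beta> 0 A 0 (ff \<beta>)"
proof -
  have "of_nat (Suc t) * NN \<beta> 0 A t (\<lambda>_. 1) = (\<Sum>s<Suc t. NN \<beta> 0 A t (\<lambda>_. 1))" by simp
  also have "\<dots> \<le> (\<Sum>s<Suc t. NN \<beta> 0 A s (\<lambda>_. 1))"
    by (intro sum_mono NN_anti1) auto
  also have "\<dots> \<le> NN \<beta> 0 A (Suc t) (ff \<beta>) + (\<Sum>s<Suc t. NN \<beta> 0 A s (\<lambda>_. 1))" by simp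
  also have "\<dots> \<le> NN \<beta> 0 A 0 (ff \<beta>)" by (rule up_cum)
  finally show ?thesis .
qed

lemma low_step:
  assumes j: "j \<ge> 1"
  shows "NN \<beta> j A (Suc t) (psi j) + ennreal ((real_of_int j)^2) * NN \<beta> j A t (\<lambda>_. 1)
     \<le> NN \<beta> j A t (psi j) + 5 * NN \<beta> j A t (\<lambda>_. 1) + ennreal ((real_of_int j)^2) * NN \<beta> j A (Suc t) (\<lambda>_. 1)"
proof -
  let ?J = "ennreal ((real_of_int j)^2)"
  let ?I = "\<lambda>xs. (\<integral>\<^sup>+y. ennreal (if j < y then psi j y else 0) \<partial>measure_pmf (step_pmf \<beta> (last xs)))"
  let ?I1 = "\<lambda>xs. (\<integral>\<^sup>+y. ennreal (if j < y then 1 else 0) \<partial>measure_pmf (step_pmf \<beta> (last xs)))"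
  have "NN \<beta> j A (Suc t) (psi j) + ?J * NN \<beta> j A t (\<lambda>_. 1) =
    (\<integral>\<^sup>+xs. (if good j A xs then ?I xs + ?J else 0) \<partial>measure_pmf (path_pmf \<beta> t))"
    unfolding nn_if_add NN_Suc NN_cmult1 ..
  also have "\<dots> \<le> (\<integral>\<^sup>+xs. (if good j A xs then ennreal (psi j (last xs)) + 5 + ?J * ?I1 xs else 0) \<partial>measure_pmf (path_pmf \<beta> t))"
  proof (rule nn_integral_mono_AE, rule AE_pmfI)
    fix xs assume xs: "xs \<in> set_pmf (path_pmf \<beta> t)"
    have p: "ennreal (psi j (last xs) + 5) = ennreal (psi j (last xs)) + 5"
    proof -
      have "psi j (last xs) \<ge> 0" by (simp add: psi_def)
      then show ?thesis by (simp add: ennreal_plus)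
    qed
    show "(if good j A xs then ?I xs + ?J else 0) \<le> (if good j A xs then ennreal (psi j (last xs)) + 5 + ?J * ?I1 xs else 0)"
      using last_good[OF xs, of j A] drift_psi[OF b1 b2 j, of "last xs"] p by auto
  qed
  also have "\<dots> = NN \<beta> j A t (psi j) + 5 * NN \<beta> j A t (\<lambda>_. 1) + ?J * NN \<beta> j A (Suc t) (\<lambda>_. 1)"
    unfolding nn_if_add nn_if_cmult NN_Suc NN_cmult1[symmetric]
    by (simp add: NN_def)
  finally show ?thesis .
qed

end


lemma ev_big:
  assumes e: "(\<epsilon>::real) > 0" and M: "M > 0"
  shows "eventually (\<lambda>t. M \<le> real t powr \<epsilon>) sequentially"
proof (rule eventually_sequentiallyI[of "nat \<lceil>M powr (1/\<epsilon>)\<rceil>"])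
  fix t assume t: "nat \<lceil>M powr (1/\<epsilon>)\<rceil> \<le> t"
  have "M powr (1/\<epsilon>) \<le> real t" using t by linarith
  then have "(M powr (1/\<epsilon>)) powr \<epsilon> \<le> real t powr \<epsilon>" using e by (intro powr_mono2) auto
  also have "(M powr (1/\<epsilon>)) powr \<epsilon> = M" using e M by (simp add: powr_powr)
  finally show "M \<le> real t powr \<epsilon>" .
qed

lemma sqrt_powr: "x \<ge> 0 \<Longrightarrow> sqrt x powr a = x powr (a/2)"
  by (simp add: powr_half_sqrt[symmetric] powr_powr)

lemma pos_set_split:
  assumes "m \<ge> 2"
  shows "{xs. \<forall>x\<in>set xs. (0::int) < x} \<subseteq> {xs. good 0 {1..m-1} xs} \<union> ({xs. m \<le> hd xs} \<union> {[]})"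
proof
  fix xs assume xs: "xs \<in> {xs. \<forall>x\<in>set xs. (0::int) < x}"
  show "xs \<in> {xs. good 0 {1..m-1} xs} \<union> ({xs. m \<le> hd xs} \<union> {[]})"
  proof (cases "xs = []")
    case False
    then have "hd xs \<in> set xs" by simp
    then have "hd xs > 0" using xs by auto
    then show ?thesis using xs by (cases "m \<le> hd xs") (auto simp: good_def)
  qed simp
qed

context
  fixes \<beta> :: real
  assumes b1: "1 < \<beta>" and b2: "\<beta> < 2"
begin

lemma ff_le: "x \<ge> 1 \<Longrightarrow> ff \<beta> x \<le> (A0 \<beta> + KK \<beta>) * (real_of_int x)^2"
proof -
  assume x: "x \<ge> 1"
  have x1: "real_of_int x \<ge> 1" using x by simp
  have "1 \<le> (real_of_int x)^2" using x1 by (simp add: one_le_power)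
  then have "A0 \<beta> * 1 \<le> A0 \<beta> * (real_of_int x)^2" using A0_ge[OF b1 b2] by (intro mult_left_mono) auto
  then have F1: "A0 \<beta> \<le> A0 \<beta> * (real_of_int x)^2" by simp
  have F2: "KK \<beta> * real_of_int x * (real_of_int x - 1) / 2 \<le> KK \<beta> * (real_of_int x)^2"
  proof -
    have "real_of_int x * (real_of_int x - 1) / 2 \<le> (real_of_int x)^2" using x1 by (simp add: power2_eq_square field_simps)
    then have "KK \<beta> * (real_of_int x * (real_of_int x - 1) / 2) \<le> KK \<beta> * (real_of_int x)^2"
      using KK_pos[OF b1 b2] by (intro mult_left_mono) auto
    then show ?thesis by (simp add: mult.assoc)
  qed
  have "ff \<beta> x = A0 \<beta> + KK \<beta> * real_of_int x * (real_of_int x - 1) / 2"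
    using b1 b2 by (simp add: ff_def)
  then show ?thesis using F1 F2 unfolding distrib_right by linarith
qed

lemma term_le:
  assumes x: "1 \<le> x" "x \<le> m"
  shows "ff \<beta> x * pi_w \<beta> x \<le> 10 * (A0 \<beta> + KK \<beta>) * real_of_int m powr (2-\<beta>)"
proof -
  have x1: "real_of_int x \<ge> 1" using x by simp
  have c0: "A0 \<beta> + KK \<beta> \<ge> 0" using A0_ge[OF b1 b2] KK_pos[OF b1 b2] by simp
  have "ff \<beta> x * pi_w \<beta> x \<le> ((A0 \<beta> + KK \<beta>) * (real_of_int x)^2) * (10 * aa \<beta> x)"
    using ff_le[OF x(1)] pi_le[OF b1 b2 x(1)] ff_nonneg[OF b1 b2] pi_w_nonneg
    by (intro mult_mono) (auto intro: order.trans[OF _ ff_le[OF x(1)]])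
  also have "(real_of_int x)^2 * aa \<beta> x = real_of_int x powr (2-\<beta>)"
    using x1 by (simp add: aa_def powr_diff powr_minus_divide powr_numeral)
  then have "((A0 \<beta> + KK \<beta>) * (real_of_int x)^2) * (10 * aa \<beta> x) = 10 * (A0 \<beta> + KK \<beta>) * real_of_int x powr (2-\<beta>)"
    by (metis (no_types, lifting) mult.assoc mult.left_commute)
  also have "\<dots> \<le> 10 * (A0 \<beta> + KK \<beta>) * real_of_int m powr (2-\<beta>)"
    using x x1 b2 c0 by (intro mult_left_mono powr_mono2) auto
  finally show ?thesis .
qed

lemma NN0_up:
  assumes m: "m \<ge> 2"
  shows "NN \<beta> 0 {1..m-1} 0 (ff \<beta>) \<le> ennreal (10 * (A0 \<beta> + KK \<beta>) * real_of_int m powr (3-\<beta>) / pi_total \<beta>)"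
proof -
  let ?A = "{1..m-1}"
  have "NN \<beta> 0 ?A 0 (ff \<beta>) = (\<Sum>x\<in>?A. (if x \<in> ?A \<and> 0 < x then ennreal (ff \<beta> x) else 0) * pmf (init_pmf \<beta>) x)"
    unfolding NN_0 by (rule nn_integral_measure_pmf_support) auto
  also have "\<dots> = (\<Sum>x\<in>?A. ennreal (ff \<beta> x * (pi_w \<beta> x / pi_total \<beta>)))"
    using Z_pos[OF b1 b2]
  proof (intro sum.cong refl)
    fix x assume "x \<in> ?A"
    then have "(if x \<in> ?A \<and> 0 < x then ennreal (ff \<beta> x) else 0) * pmf (init_pmf \<beta>) x = ennreal (ff \<beta> x) * ennreal (pi_w \<beta> x / pi_total \<beta>)"
      by (simp add: pmf_init[OF b1 b2])
    also have "\<dots> = ennreal (ff \<beta> x * (pi_w \<beta> x / pi_total \<beta>))"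
      by (rule ennreal_mult[symmetric]) (use Z_pos[OF b1 b2] ff_nonneg[OF b1 b2] pi_w_nonneg in auto)
    finally show "(if x \<in> ?A \<and> 0 < x then ennreal (ff \<beta> x) else 0) * pmf (init_pmf \<beta>) x = ennreal (ff \<beta> x * (pi_w \<beta> x / pi_total \<beta>))" .
  qed
  also have "\<dots> = ennreal (\<Sum>x\<in>?A. ff \<beta> x * (pi_w \<beta> x / pi_total \<beta>))"
    by (rule sum_ennreal) (intro mult_nonneg_nonneg divide_nonneg_nonneg ff_nonneg[OF b1 b2] pi_w_nonneg order.strict_implies_order[OF Z_pos[OF b1 b2]])
  also have "(\<Sum>x\<in>?A. ff \<beta> x * (pi_w \<beta> x / pi_total \<beta>)) \<le> (\<Sum>x\<in>?A. 10 * (A0 \<beta> + KK \<beta>) * real_of_int m powr (2-\<beta>) / pi_total \<beta>)"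
  proof (rule sum_mono)
    fix x assume "x \<in> ?A"
    then have "ff \<beta> x * pi_w \<beta> x \<le> 10 * (A0 \<beta> + KK \<beta>) * real_of_int m powr (2-\<beta>)" by (intro term_le) auto
    then show "ff \<beta> x * (pi_w \<beta> x / pi_total \<beta>) \<le> 10 * (A0 \<beta> + KK \<beta>) * real_of_int m powr (2-\<beta>) / pi_total \<beta>"
      using Z_pos[OF b1 b2] by (simp add: divide_right_mono)
  qed
  also have "\<dots> = real_of_int (m-1) * (10 * (A0 \<beta> + KK \<beta>) * real_of_int m powr (2-\<beta>) / pi_total \<beta>)"
    using m by simp
  also have "\<dots> \<le> real_of_int m * (10 * (A0 \<beta> + KK \<beta>) * real_of_int m powr (2-\<beta>) / pi_total \<beta>)"
    using Z_pos[OF b1 b2] A0_ge[OF b1 b2] KK_pos[OF b1 b2] by (intro mult_right_mono) auto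
  also have "real_of_int m * real_of_int m powr (2-\<beta>) = real_of_int m powr (3-\<beta>)"
    using m by (subst powr_mult_base) auto
  then have "real_of_int m * (10 * (A0 \<beta> + KK \<beta>) * real_of_int m powr (2-\<beta>) / pi_total \<beta>)
     = 10 * (A0 \<beta> + KK \<beta>) * real_of_int m powr (3-\<beta>) / pi_total \<beta>"
    by (metis (no_types, lifting) mult.assoc mult.left_commute times_divide_eq_right)
  finally show ?thesis by (metis ennreal_leI)
qed

lemma upper_main:
  assumes m: "m \<ge> 2"
  shows "stay_pos \<beta> t \<le> measure_pmf.prob (init_pmf \<beta>) {x. x \<ge> m}
      + 10 * (A0 \<beta> + KK \<beta>) * real_of_int m powr (3-\<beta>) / pi_total \<beta> / real (Suc t)"
proof -
  let ?A = "{1..m-1}"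
  let ?S = "measure_pmf.prob (path_pmf \<beta> t) {xs. good 0 ?A xs}"
  let ?B = "10 * (A0 \<beta> + KK \<beta>) * real_of_int m powr (3-\<beta>) / pi_total \<beta>"
  have "of_nat (Suc t) * ennreal ?S \<le> ennreal ?B"
    using up_final[OF b1 b2, of t ?A] NN0_up[OF m] unfolding NN_one by (rule order.trans)
  then have "ennreal (real (Suc t) * ?S) \<le> ennreal ?B"
    by (simp add: ennreal_of_nat_eq_real_of_nat ennreal_mult)
  moreover have "?B \<ge> 0" using Z_pos[OF b1 b2] A0_ge[OF b1 b2] KK_pos[OF b1 b2] by simp
  ultimately have "real (Suc t) * ?S \<le> ?B" by simp
  then have "?S * real (Suc t) \<le> ?B" by (simp only: mult.commute)
  then have S: "?S \<le> ?B / real (Suc t)" by (simp only: pos_le_divide_eq[of "real (Suc t)"] of_nat_0_less_iff zero_less_Suc)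
  have "stay_pos \<beta> t \<le> measure_pmf.prob (path_pmf \<beta> t) ({xs. good 0 ?A xs} \<union> ({xs. m \<le> hd xs} \<union> {[]}))"
    unfolding stay_pos_def by (intro measure_pmf.finite_measure_mono pos_set_split[OF m]) simp
  also have "\<dots> \<le> ?S + measure_pmf.prob (path_pmf \<beta> t) ({xs. m \<le> hd xs} \<union> {[]})"
    by (rule measure_Un_le) simp_all
  also have "measure_pmf.prob (path_pmf \<beta> t) ({xs. m \<le> hd xs} \<union> {[]}) \<le>
      measure_pmf.prob (path_pmf \<beta> t) {xs. m \<le> hd xs} + measure_pmf.prob (path_pmf \<beta> t) {[]}"
    by (rule measure_Un_le) simp_all
  also have "measure_pmf.prob (path_pmf \<beta> t) {[]} = 0"
    using path_supp[of "[]" \<beta> t] by (auto simp: measure_pmf_single set_pmf_iff)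
  also have "measure_pmf.prob (path_pmf \<beta> t) {xs. m \<le> hd xs} = measure_pmf.prob (init_pmf \<beta>) {x. x \<ge> m}"
  proof -
    have "measure_pmf.prob (map_pmf hd (path_pmf \<beta> t)) {x. x \<ge> m} = measure_pmf.prob (path_pmf \<beta> t) {xs. m \<le> hd xs}"
      by (simp add: vimage_def)
    then show ?thesis by (simp add: hd_path)
  qed
  finally show ?thesis using S by simp
qed

end


context
  fixes \<beta> :: real
  assumes b1: "1 < \<beta>" and b2: "\<beta> < 2"
begin

lemma psi_bound:
  assumes "xs \<in> set_pmf (path_pmf \<beta> n)"
  shows "(if good j A xs then ennreal (psi j (last xs)) else 0) \<le> ennreal ((real_of_int j)^2)"
proof (cases "good j A xs")
  case True
  then have l: "j < last xs" using last_good[OF assms] by blast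
  show ?thesis
  proof (cases "j \<ge> 0")
    case True
    have "max 0 (2*j - last xs) \<le> j" using l True by simp
    then have "real_of_int (max 0 (2*j - last xs)) \<le> real_of_int j" by linarith
    then have "psi j (last xs) \<le> (real_of_int j)^2" unfolding psi_def by (intro power_mono) auto
    then show ?thesis using `good j A xs` by (simp add: ennreal_leI)
  next
    case False
    then show ?thesis using `good j A xs` l unfolding psi_def
      by (auto intro!: ennreal_leI power_mono simp: max_def)
  qed
qed simp

lemma NN_psi_fin: "NN \<beta> j A n (psi j) \<le> ennreal ((real_of_int j)^2)"
proof -
  have "NN \<beta> j A n (psi j) \<le> (\<integral>\<^sup>+xs. ennreal ((real_of_int j)^2) \<partial>measure_pmf (path_pmf \<beta> n))"
    unfolding NN_def by (rule nn_integral_mono_AE, rule AE_pmfI, rule psi_bound)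
  also have "\<dots> = ennreal ((real_of_int j)^2)" by simp
  finally show ?thesis .
qed

lemma low_main:
  assumes j: "j \<ge> 1"
  shows "stay_pos \<beta> t \<ge> measure_pmf.prob (init_pmf \<beta>) {2*j..4*j} * (1 - 5 * real t / (real_of_int j)^2)"
proof -
  let ?A = "{2*j..4*j}"
  define s where "s n = measure_pmf.prob (path_pmf \<beta> n) {xs. good j ?A xs}" for n
  define w where "w n = enn2real (NN \<beta> j ?A n (psi j))" for n
  let ?J = "(real_of_int j)^2"
  have sN: "NN \<beta> j ?A n (\<lambda>_. 1) = ennreal (s n)" for n unfolding s_def by (rule NN_one)
  have wN: "NN \<beta> j ?A n (psi j) = ennreal (w n)" for n
  proof -
    have "NN \<beta> j ?A n (psi j) \<noteq> \<top>" using NN_psi_fin[of j ?A n] by (metis ennreal_neq_top neq_top_trans)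
    then show ?thesis unfolding w_def by (simp add: less_top)
  qed
  have w0: "w n \<ge> 0" for n unfolding w_def by simp
  have s0: "s n \<ge> 0" for n unfolding s_def by simp
  have wz: "w 0 = 0"
  proof -
    have "NN \<beta> j ?A 0 (psi j) = (\<integral>\<^sup>+x. 0 \<partial>measure_pmf (init_pmf \<beta>))"
      unfolding NN_0 by (intro nn_integral_cong) (auto simp: psi_def)
    then show ?thesis unfolding w_def by simp
  qed
  have step: "w (Suc n) + ?J * s n \<le> w n + 5 * s n + ?J * s (Suc n)" for n
  proof -
    have "ennreal (w (Suc n)) + ennreal ?J * ennreal (s n) \<le> ennreal (w n) + 5 * ennreal (s n) + ennreal ?J * ennreal (s (Suc n))"
      using low_step[OF b1 b2 j, of ?A n] unfolding sN wN .
    moreover have "ennreal (w (Suc n)) + ennreal ?J * ennreal (s n) = ennreal (w (Suc n) + ?J * s n)"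
      using w0 s0 by (simp add: ennreal_plus ennreal_mult)
    moreover have "ennreal (w n) + 5 * ennreal (s n) + ennreal ?J * ennreal (s (Suc n)) = ennreal (w n + 5 * s n + ?J * s (Suc n))"
      using w0 s0 by (simp add: ennreal_plus ennreal_mult)
    moreover have "w n + 5 * s n + ?J * s (Suc n) \<ge> 0" using w0 s0 by simp
    ultimately show ?thesis by simp
  qed
  have cum: "w n + ?J * s 0 \<le> 5 * (\<Sum>i<n. s i) + ?J * s n" for n
  proof (induction n)
    case 0 then show ?case using wz by simp
  next
    case (Suc n)
    then show ?case using step[of n] by simp
  qed
  have mono: "s i \<le> s 0" for i
  proof -
    have "ennreal (s i) \<le> ennreal (s 0)" using NN_anti1[of 0 i \<beta> j ?A] unfolding sN by simp
    then show ?thesis using s0 by simp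
  qed
  have "(\<Sum>i<t. s i) \<le> (\<Sum>i<t. s 0)" by (intro sum_mono mono)
  then have "?J * s 0 \<le> 5 * (real t * s 0) + ?J * s t" using cum[of t] w0[of t] by simp
  then have key: "s 0 * (1 - 5 * real t / ?J) \<le> s t"
    using j by (simp add: field_simps)
  have s00: "s 0 = measure_pmf.prob (init_pmf \<beta>) ?A"
  proof -
    have "s 0 = measure_pmf.prob (init_pmf \<beta>) ((\<lambda>x. [x]) -` {xs. good j ?A xs})"
      unfolding s_def by simp
    also have "(\<lambda>x. [x]) -` {xs. good j ?A xs} = ?A" using j by (auto simp: good_def)
    finally show ?thesis .
  qed
  have "s t \<le> stay_pos \<beta> t"
    unfolding s_def stay_pos_def using j by (intro measure_pmf.finite_measure_mono) (auto simp: good_def, fastforce)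
  then show ?thesis using key s00 by simp
qed

end


context
  fixes \<beta> :: real
  assumes b1: "1 < \<beta>" and b2: "\<beta> < 2"
begin

lemma upper_asym:
  assumes t: "t \<ge> 4"
  shows "stay_pos \<beta> t \<le> (20/((\<beta>-1)*pi_total \<beta>) + 80*(A0 \<beta> + KK \<beta>)/pi_total \<beta>) * real t powr ((1-\<beta>)/2)"
proof -
  define T where "T = real t"
  define r where "r = sqrt T"
  define m where "m = \<lceil>r\<rceil>"
  define a where "a = (1-\<beta>)/2"
  define Z where "Z = pi_total \<beta>"
  have Z: "Z > 0" unfolding Z_def using Z_pos[OF b1 b2] .
  have T4: "T \<ge> 4" using t unfolding T_def by simp
  have r2: "r \<ge> 2" unfolding r_def using T4 real_sqrt_le_mono[of 4 T] by simp
  have mr: "real_of_int m \<ge> r" "real_of_int m \<le> r + 1" unfolding m_def using ceiling_correct[of r] by auto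
  have m2: "m \<ge> 2" using mr r2 by linarith
  have Ta: "T powr a > 0" using T4 by simp
  have c0: "A0 \<beta> + KK \<beta> \<ge> 0" using A0_ge[OF b1 b2] KK_pos[OF b1 b2] by simp
  have rp: "r powr x = T powr (x/2)" for x unfolding r_def using T4 by (simp add: sqrt_powr)
  have "GG \<beta> (m-1) = real_of_int (m-1) powr (1-\<beta>)" using b1 b2 by (simp add: GG_def)
  also have "\<dots> \<le> (r/2) powr (1-\<beta>)" using mr r2 b1 by (intro powr_mono2') auto
  also have "(r/2) powr (1-\<beta>) = T powr a / 2 powr (1-\<beta>)"
    using r2 by (simp add: powr_divide rp a_def)
  also have "\<dots> = T powr a * 2 powr (\<beta>-1)"
  proof -
    have h: "2 powr (\<beta>-1) = 1 / 2 powr (1-\<beta>)" using powr_minus_divide[of 2 "1-\<beta>"] by simp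
    show ?thesis unfolding h by simp
  qed
  also have "\<dots> \<le> T powr a * 2"
  proof -
    have "2 powr (\<beta>-1) \<le> 2 powr 1" using b2 by (intro powr_mono) auto
    then show ?thesis using Ta by (intro mult_left_mono) auto
  qed
  finally have G: "GG \<beta> (m-1) \<le> T powr a * 2" .
  have tail: "measure_pmf.prob (init_pmf \<beta>) {x. x \<ge> m} \<le> 20/((\<beta>-1)*Z) * T powr a"
  proof -
    have "measure_pmf.prob (init_pmf \<beta>) {x. x \<ge> m} \<le> 10/(\<beta>-1) * GG \<beta> (m-1) / Z"
      using tail_upper[OF b1 b2 m2] unfolding Z_def .
    also have "\<dots> \<le> 10/(\<beta>-1) * (T powr a * 2) / Z"
      using G b1 Z by (intro divide_right_mono mult_left_mono) auto
    also have "\<dots> = 20/((\<beta>-1)*Z) * T powr a" by (simp add: field_simps)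
    finally show ?thesis .
  qed
  have "real_of_int m powr (3-\<beta>) \<le> (2*r) powr (3-\<beta>)" using mr r2 b2 by (intro powr_mono2) auto
  also have "(2*r) powr (3-\<beta>) = 2 powr (3-\<beta>) * (T * T powr a)"
  proof -
    have e1: "T * T powr a = T powr (1 + a)" using T4 by (intro powr_mult_base) simp
    have e2: "1 + a = (3-\<beta>)/2" unfolding a_def by simp
    show ?thesis using r2 by (simp add: powr_mult rp e1 e2)
  qed
  also have "\<dots> \<le> 8 * (T * T powr a)"
  proof -
    have "2 powr (3-\<beta>) \<le> 2 powr 3" using b1 by (intro powr_mono) auto
    then show ?thesis using Ta T4 by (intro mult_right_mono) auto
  qed
  finally have M: "real_of_int m powr (3-\<beta>) \<le> 8 * (T * T powr a)" .
  have sec: "10 * (A0 \<beta> + KK \<beta>) * real_of_int m powr (3-\<beta>) / Z / real (Suc t) \<le> 80*(A0 \<beta> + KK \<beta>)/Z * T powr a"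
  proof -
    have "10 * (A0 \<beta> + KK \<beta>) * real_of_int m powr (3-\<beta>) / Z / real (Suc t)
        \<le> 10 * (A0 \<beta> + KK \<beta>) * (8 * (T * T powr a)) / Z / T"
      using M c0 Z T4 unfolding T_def
      by (intro divide_mono mult_left_mono divide_right_mono) auto
    also have "\<dots> = 80*(A0 \<beta> + KK \<beta>)/Z * T powr a" using T4 Z by (simp add: field_simps)
    finally show ?thesis .
  qed
  have "stay_pos \<beta> t \<le> measure_pmf.prob (init_pmf \<beta>) {x. x \<ge> m}
      + 10 * (A0 \<beta> + KK \<beta>) * real_of_int m powr (3-\<beta>) / Z / real (Suc t)"
    using upper_main[OF b1 b2 m2, of t] unfolding Z_def .
  also have "\<dots> \<le> 20/((\<beta>-1)*Z) * T powr a + 80*(A0 \<beta> + KK \<beta>)/Z * T powr a"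
    using tail sec by simp
  finally show ?thesis unfolding T_def a_def Z_def by (simp add: distrib_right)
qed

lemma lower_asym:
  assumes t: "t \<ge> 1"
  shows "stay_pos \<beta> t \<ge> real t powr ((1-\<beta>)/2) / (40 * pi_total \<beta>)"
proof -
  define T where "T = real t"
  define q where "q = sqrt (10*T)"
  define j where "j = \<lceil>q\<rceil>"
  define a where "a = (1-\<beta>)/2"
  define Z where "Z = pi_total \<beta>"
  have Z: "Z > 0" unfolding Z_def using Z_pos[OF b1 b2] .
  have T1: "T \<ge> 1" using t unfolding T_def by simp
  have sT: "sqrt T \<ge> 1" using T1 by simp
  have q1: "q \<ge> 1" unfolding q_def using T1 by simp
  have jq: "real_of_int j \<ge> q" "real_of_int j \<le> q + 1" unfolding j_def using ceiling_correct[of q] by auto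
  have j1: "j \<ge> 1" using jq q1 by linarith
  have "q = sqrt 10 * sqrt T" unfolding q_def by (simp add: real_sqrt_mult)
  also have "\<dots> \<le> 4 * sqrt T"
  proof -
    have "sqrt 10 \<le> sqrt 16" by (rule real_sqrt_le_mono) simp
    then have "sqrt 10 \<le> 4" by simp
    then show ?thesis using sT by (intro mult_right_mono) auto
  qed
  finally have q4: "q \<le> 4 * sqrt T" .
  have "real_of_int j \<le> 5 * sqrt T" using jq q4 sT by linarith
  then have j5: "real_of_int (4*j) \<le> 20 * sqrt T" by simp
  have jj: "(real_of_int j)^2 \<ge> 10 * T"
  proof -
    have "q^2 = 10*T" unfolding q_def using T1 by simp
    moreover have "q^2 \<le> (real_of_int j)^2" using jq q1 by (intro power_mono) auto
    ultimately show ?thesis by simp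
  qed
  have half: "1 - 5 * T / (real_of_int j)^2 \<ge> 1/2"
  proof -
    have jp: "(real_of_int j)^2 > 0" using j1 by simp
    have "5 * T / (real_of_int j)^2 \<le> 5 * T / (10 * T)" using jj T1 jp by (intro divide_left_mono mult_pos_pos) auto
    then show ?thesis using T1 by simp
  qed
  define s0 where "s0 = measure_pmf.prob (init_pmf \<beta>) {2*j..4*j}"
  have s0nn: "s0 \<ge> 0" unfolding s0_def by simp
  have P3: "(20 * sqrt T) powr (1-\<beta>) \<le> real_of_int (4*j) powr (1-\<beta>)"
    using j5 j1 b1 by (intro powr_mono2') auto
  have P2: "(20 * sqrt T) powr (1-\<beta>) = 20 powr (1-\<beta>) * T powr a"
    using T1 by (simp add: powr_mult sqrt_powr a_def)
  have "20 powr (-1) \<le> 20 powr (1-\<beta>)" using b2 by (intro powr_mono) auto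
  then have P1: "20 powr (-1) * T powr a \<le> 20 powr (1-\<beta>) * T powr a" using T1 by (intro mult_right_mono) auto
  have P0: "T powr a / 20 = 20 powr (-1) * T powr a" by (simp add: powr_minus_divide)
  have P: "T powr a / 20 \<le> real_of_int (4*j) powr (1-\<beta>)" unfolding P0 using P1 P2 P3 by linarith
  have "s0 \<ge> T powr a / 20 / Z"
  proof -
    have "s0 \<ge> real_of_int (4*j) powr (1-\<beta>) / Z" unfolding s0_def Z_def by (rule block_lower[OF b1 b2 j1])
    moreover have "real_of_int (4*j) powr (1-\<beta>) / Z \<ge> T powr a / 20 / Z" using P Z by (intro divide_right_mono) auto
    ultimately show ?thesis by simp
  qed
  have "stay_pos \<beta> t \<ge> s0 * (1 - 5 * T / (real_of_int j)^2)"
    using low_main[OF b1 b2 j1, of t] unfolding s0_def T_def .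
  moreover have "s0 * (1 - 5 * T / (real_of_int j)^2) \<ge> s0 * (1/2)" using half s0nn by (intro mult_left_mono) auto
  moreover have "s0 * (1/2) \<ge> T powr a / (40 * Z)" using `s0 \<ge> T powr a / 20 / Z` by (simp add: field_simps)
  ultimately show ?thesis unfolding T_def a_def Z_def by linarith
qed

end

theorem mainTheorem6:
  fixes \<beta> :: real
  assumes "1 < \<beta>" and "\<beta> < 2"
  shows "measure_pmf.prob (init_pmf \<beta>) {x. 0 < x} = 1/2
    \<and> (\<forall>\<epsilon>>0. eventually (\<lambda>t. real t powr ((1 - \<beta>)/2 - \<epsilon>) \<le> stay_pos \<beta> t
                           \<and> stay_pos \<beta> t \<le> real t powr ((1 - \<beta>)/2 + \<epsilon>)) sequentially)"
proof
  note b1 = assms(1) and b2 = assms(2)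
  show "measure_pmf.prob (init_pmf \<beta>) {x. 0 < x} = 1/2" by (rule half[OF b1 b2])
  show "\<forall>\<epsilon>>0. eventually (\<lambda>t. real t powr ((1 - \<beta>)/2 - \<epsilon>) \<le> stay_pos \<beta> t
                           \<and> stay_pos \<beta> t \<le> real t powr ((1 - \<beta>)/2 + \<epsilon>)) sequentially"
  proof (intro allI impI)
    fix \<epsilon> :: real assume e: "\<epsilon> > 0"
    define Cu where "Cu = 20/((\<beta>-1)*pi_total \<beta>) + 80*(A0 \<beta> + KK \<beta>)/pi_total \<beta>"
    define Cl where "Cl = 40 * pi_total \<beta>"
    have Z: "pi_total \<beta> > 0" using Z_pos[OF b1 b2] .
    have Cu: "Cu > 0" unfolding Cu_def using Z b1 A0_ge[OF b1 b2] KK_pos[OF b1 b2]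
      by (intro add_pos_nonneg divide_pos_pos mult_pos_pos) auto
    have Cl: "Cl > 0" unfolding Cl_def using Z by simp
    have ev4: "eventually (\<lambda>t::nat. t \<ge> 4) sequentially" by (rule eventually_ge_at_top)
    have ev: "eventually (\<lambda>t. t \<ge> 4 \<and> Cu \<le> real t powr \<epsilon> \<and> Cl \<le> real t powr \<epsilon>) sequentially"
      by (intro eventually_conj ev4 ev_big[OF e Cu] ev_big[OF e Cl])
    show "eventually (\<lambda>t. real t powr ((1 - \<beta>)/2 - \<epsilon>) \<le> stay_pos \<beta> t
                           \<and> stay_pos \<beta> t \<le> real t powr ((1 - \<beta>)/2 + \<epsilon>)) sequentially"
    proof (rule eventually_mono[OF ev], clarify)
      fix t :: nat assume t: "t \<ge> 4" and c1: "Cu \<le> real t powr \<epsilon>" and c2: "Cl \<le> real t powr \<epsilon>"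
      let ?a = "(1-\<beta>)/2"
      have Tp: "real t powr ?a > 0" "real t powr \<epsilon> > 0" using t by auto
      have "stay_pos \<beta> t \<le> Cu * real t powr ?a" unfolding Cu_def by (rule upper_asym[OF b1 b2 t])
      also have "\<dots> \<le> real t powr \<epsilon> * real t powr ?a" using c1 Tp by (intro mult_right_mono) auto
      also have "\<dots> = real t powr (?a + \<epsilon>)" by (simp add: powr_add)
      finally have up: "stay_pos \<beta> t \<le> real t powr (?a + \<epsilon>)" .
      have "real t powr (?a - \<epsilon>) = real t powr ?a / real t powr \<epsilon>" by (simp add: powr_diff)
      also have "\<dots> \<le> real t powr ?a / Cl" using c2 Cl Tp by (intro divide_left_mono) auto
      also have "\<dots> \<le> stay_pos \<beta> t" using lower_asym[OF b1 b2, of t] t unfolding Cl_def by simp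
      finally show "real t powr (?a - \<epsilon>) \<le> stay_pos \<beta> t \<and> stay_pos \<beta> t \<le> real t powr (?a + \<epsilon>)"
        using up by simp
    qed
  qed
qed


end
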